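(* Let $K_1,K_{-1}\subseteq[N]$ be disjoint, $x_{\pm}=\mathbb{1}_{K_1}-\mathbb{1}_{K_{-1}}$, and let $A\in\mathbb{R}^{m\times N}$ satisfy the robust bipolar ternary null space property with constants $0<\rho<1$, $\tau>0$ relative to $K_{-1},K_1$. Let $b=Ax_\pm+e$ with $\|e\|_2\le\eta$. Then every solution $\hat z$ of $\min\|z\|_1$ subject to $\|Az-b\|_2\le\eta$ and $z\in[-1,1]^N$ satisfies $\|\hat z-x_\pm\|_1\le\frac{4\tau}{1-\rho}\eta$.
   Context: $\mathbb{1}_S$ has entries $1$ on $S$, $0$ elsewhere; $K=K_1\cup K_{-1}$, $K^C=[N]\setminus K$. $H_{K_1,K_{-1}}=\{w\in\mathbb{R}^N: w_i\le0\text{ for } i\in K_1,\ w_i\ge0 \text{ for } i\in K_{-1}\}$. $A$ satisfies the robust bipolar ternary null space property with constants $\rho,\tau$ relative to $K_{-1},K_1$ if $\sum_{i\in K_{-1}}v_i-\sum_{i\in K_1}v_i\le\rho\sum_{i\in K^C}|v_i|+\tau\|Av\|_2$ for every $v\in H_{K_1,K_{-1}}$. *)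

theory Defs
  imports "HOL-Analysis.Analysis"
begin

text \<open>Vectors in R^N are modelled as real^'n (index type 'n of cardinality N),
  matrices in R^(m x N) as real^'n^'m.\<close>

definition l1norm :: "real^'n \<Rightarrow> real" where
  "l1norm v = (\<Sum>i\<in>UNIV. \<bar>v $ i\<bar>)"

definition indvec :: "'n set \<Rightarrow> real^'n" where
  "indvec S = (\<chi> i. if i \<in> S then 1 else 0)"

definition H_set :: "'n set \<Rightarrow> 'n set \<Rightarrow> (real^'n) set" where
  "H_set K1 Km1 = {w. (\<forall>i\<in>K1. w $ i \<le> 0) \<and> (\<forall>i\<in>Km1. w $ i \<ge> 0)}"

definition robust_bipolar_ternary_NSP ::
  "real^'n^'m \<Rightarrow> real \<Rightarrow> real \<Rightarrow> 'n set \<Rightarrow> 'n set \<Rightarrow> bool" where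
  "robust_bipolar_ternary_NSP A \<rho> \<tau> Km1 K1 \<longleftrightarrow>
     (\<forall>v\<in>H_set K1 Km1.
        (\<Sum>i\<in>Km1. v $ i) - (\<Sum>i\<in>K1. v $ i)
          \<le> \<rho> * (\<Sum>i\<in>UNIV - (K1 \<union> Km1). \<bar>v $ i\<bar>) + \<tau> * norm (A *v v))"

definition feasible :: "real^'n^'m \<Rightarrow> real^'m \<Rightarrow> real \<Rightarrow> real^'n \<Rightarrow> bool" where
  "feasible A b \<eta> z \<longleftrightarrow> norm (A *v z - b) \<le> \<eta> \<and> (\<forall>i. -1 \<le> z $ i \<and> z $ i \<le> 1)"

definition is_l1_min_solution :: "real^'n^'m \<Rightarrow> real^'m \<Rightarrow> real \<Rightarrow> real^'n \<Rightarrow> bool" where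
  "is_l1_min_solution A b \<eta> z \<longleftrightarrow>
     feasible A b \<eta> z \<and> (\<forall>z'. feasible A b \<eta> z' \<longrightarrow> l1norm z \<le> l1norm z')"

end

theory Submission
  imports Defs
begin

lemma split3:
  fixes f :: "'n::finite \<Rightarrow> real"
  assumes "K1 \<inter> Km1 = {}"
  shows "sum f UNIV = sum f K1 + sum f Km1 + sum f (UNIV - (K1 \<union> Km1))"
proof -
  have "sum f UNIV = sum f (K1 \<union> Km1) + sum f (UNIV - (K1 \<union> Km1))"
  proof -
    have "UNIV = (K1 \<union> Km1) \<union> (UNIV - (K1 \<union> Km1))" by blast
    hence "sum f UNIV = sum f ((K1 \<union> Km1) \<union> (UNIV - (K1 \<union> Km1)))" by simp
    also have "\<dots> = sum f (K1 \<union> Km1) + sum f (UNIV - (K1 \<union> Km1))"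
      by (rule sum.union_disjoint) auto
    finally show ?thesis .
  qed
  also have "sum f (K1 \<union> Km1) = sum f K1 + sum f Km1"
    using assms by (simp add: sum.union_disjoint)
  finally show ?thesis .
qed

theorem theorem3p6:
  fixes A :: "real^'n^'m" and K1 Km1 :: "'n set" and \<rho> \<tau> \<eta> :: real
    and e b :: "real^'m" and zhat :: "real^'n"
  assumes "K1 \<inter> Km1 = {}"
    and "0 < \<rho>" and "\<rho> < 1" and "0 < \<tau>"
    and "robust_bipolar_ternary_NSP A \<rho> \<tau> Km1 K1"
    and "b = A *v (indvec K1 - indvec Km1) + e"
    and "norm e \<le> \<eta>"
    and "is_l1_min_solution A b \<eta> zhat"
  shows "l1norm (zhat - (indvec K1 - indvec Km1)) \<le> 4 * \<tau> / (1 - \<rho>) * \<eta>"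
proof -
  define x where "x = indvec K1 - indvec Km1"
  define v where "v = zhat - x"
  define C where "C = UNIV - (K1 \<union> Km1)"
  have x1: "\<And>i. i \<in> K1 \<Longrightarrow> x $ i = 1" using assms(1) by (auto simp: x_def indvec_def)
  have xm: "\<And>i. i \<in> Km1 \<Longrightarrow> x $ i = -1" using assms(1) by (auto simp: x_def indvec_def)
  have xc: "\<And>i. i \<in> C \<Longrightarrow> x $ i = 0" by (auto simp: x_def indvec_def C_def)
  have fz: "feasible A b \<eta> zhat" and mn: "\<And>z'. feasible A b \<eta> z' \<Longrightarrow> l1norm zhat \<le> l1norm z'"
    using assms(8) by (auto simp: is_l1_min_solution_def)
  have zb: "\<And>i. -1 \<le> zhat $ i \<and> zhat $ i \<le> 1" using fz by (auto simp: feasible_def)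
  have fx: "feasible A b \<eta> x"
  proof -
    have "A *v x - b = - e" using assms(6) by (simp add: x_def)
    hence "norm (A *v x - b) \<le> \<eta>" using assms(7) by simp
    moreover have "\<forall>i. -1 \<le> x $ i \<and> x $ i \<le> 1"
    proof
      fix i show "-1 \<le> x $ i \<and> x $ i \<le> 1"
        using x1[of i] xm[of i] xc[of i] by (cases "i \<in> K1"; cases "i \<in> Km1"; auto simp: C_def)
    qed
    ultimately show ?thesis by (simp add: feasible_def)
  qed
  have le: "l1norm zhat \<le> l1norm x" using mn fx by blast
  have zv: "zhat = x + v" by (simp add: v_def)
  define T where "T = (\<Sum>i\<in>Km1. v $ i) - (\<Sum>i\<in>K1. v $ i)"
  define R where "R = (\<Sum>i\<in>C. \<bar>v $ i\<bar>)"
  have lx: "l1norm x = card K1 + card Km1"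
    unfolding l1norm_def split3[OF assms(1)] C_def[symmetric] by (simp add: x1 xm xc)
  have lz: "l1norm zhat \<ge> card K1 + card Km1 - T + R"
  proof -
    have a: "(\<Sum>i\<in>K1. \<bar>zhat $ i\<bar>) \<ge> (\<Sum>i\<in>K1. 1 + v $ i)"
      by (rule sum_mono) (simp add: zv x1)
    have b: "(\<Sum>i\<in>Km1. \<bar>zhat $ i\<bar>) \<ge> (\<Sum>i\<in>Km1. 1 - v $ i)"
      by (rule sum_mono) (simp add: zv xm)
    have c: "(\<Sum>i\<in>C. \<bar>zhat $ i\<bar>) = R"
      unfolding R_def by (rule sum.cong) (simp_all add: zv xc)
    show ?thesis using a b c unfolding l1norm_def split3[OF assms(1)] C_def[symmetric] T_def
      by (simp add: sum.distrib sum_subtractf)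
  qed
  have RT: "R \<le> T" using le lx lz by linarith
  have vH: "v \<in> H_set K1 Km1"
    unfolding H_set_def
  proof (intro CollectI conjI ballI)
    fix i assume "i \<in> K1" thus "v $ i \<le> 0" using zb[of i] x1[of i] by (simp add: v_def)
  next
    fix i assume "i \<in> Km1" thus "0 \<le> v $ i" using zb[of i] xm[of i] by (simp add: v_def)
  qed
  have lv: "l1norm v = T + R"
  proof -
    have a: "(\<Sum>i\<in>K1. \<bar>v $ i\<bar>) = - (\<Sum>i\<in>K1. v $ i)"
      using vH unfolding H_set_def by (simp add: sum_negf[symmetric])
    have b: "(\<Sum>i\<in>Km1. \<bar>v $ i\<bar>) = (\<Sum>i\<in>Km1. v $ i)"
      using vH unfolding H_set_def by simp
    show ?thesis unfolding l1norm_def split3[OF assms(1)] C_def[symmetric] a b T_def R_def by simp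
  qed
  have nsp: "T \<le> \<rho> * R + \<tau> * norm (A *v v)"
    using assms(5) vH unfolding robust_bipolar_ternary_NSP_def T_def R_def C_def by blast
  have Av: "norm (A *v v) \<le> 2 * \<eta>"
  proof -
    have "A *v v = (A *v zhat - b) + e" using assms(6) by (simp add: v_def x_def matrix_vector_mult_diff_distrib)
    hence "norm (A *v v) \<le> norm (A *v zhat - b) + norm e" by (metis norm_triangle_ineq)
    thus ?thesis using fz assms(7) by (simp add: feasible_def)
  qed
  have R0: "0 \<le> R" unfolding R_def by (simp add: sum_nonneg)
  have "T \<le> \<rho> * T + \<tau> * (2 * \<eta>)"
  proof -
    have "\<rho> * R \<le> \<rho> * T" using RT assms(2) by (simp add: mult_left_mono)
    moreover have "\<tau> * norm (A *v v) \<le> \<tau> * (2 * \<eta>)" using Av assms(4) by (simp add: mult_left_mono)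
    ultimately show ?thesis using nsp by linarith
  qed
  hence "(1 - \<rho>) * T \<le> 2 * \<tau> * \<eta>" by (simp add: algebra_simps)
  hence "T \<le> 2 * \<tau> * \<eta> / (1 - \<rho>)" using assms(3) by (simp add: field_simps)
  hence "l1norm v \<le> 4 * \<tau> * \<eta> / (1 - \<rho>)" using lv RT by simp
  thus ?thesis by (simp add: v_def x_def)
qed

end
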